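(* Let $m\ge2$ be an integer and $z$ a complex number with $0<|z|<1$. Then $$\sum_{k=1}^\infty\frac{\binom{2k}{m}z^{2k}}{(2k-1)k^2(2k+1)}=\frac{2(-1)^{m-1}}{m}\ln(1-z^2)+\frac{(-1)^m}{z}\ln\Big(\frac{1-z}{1+z}\Big)$$ $$+\frac{1}{m-1}\left((-1)^m(1+z)\Big(\frac{z}{1+z}\Big)^m+(1-z)\Big(\frac{z}{1-z}\Big)^m\right)-\frac1m\left((-1)^mz\Big(\frac{z}{1+z}\Big)^m-z\Big(\frac{z}{1-z}\Big)^m\right)$$ $$+\frac2m\sum_{j=1}^{m-1}\frac{1}{m-j}\left((-1)^m\Big(\frac{z}{1+z}\Big)^{m-j}+(-1)^j\Big(\frac{z}{1-z}\Big)^{m-j}\right)$$ $$+\sum_{j=0}^{m-1}\frac{1}{m-j}\left((-1)^m\frac1z\Big(\frac{z}{1+z}\Big)^{m-j}-(-1)^j\frac1z\Big(\frac{z}{1-z}\Big)^{m-j}\right).$$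
   Context: $\ln$ denotes the principal branch of the logarithm. *)

theory Defs
  imports "HOL-Analysis.Analysis"
begin

end

theory Submission
  imports Defs
begin

lemma base_lemma:
  fixes x :: "'a::{real_normed_field,banach}"
  assumes "norm x < 1"
  shows "summable (\<lambda>n. norm (of_nat (n choose k) * x^n)) \<and>
         (\<lambda>n. of_nat (n choose k) * x^n) sums (x^k / (1-x)^(Suc k))"
proof (induction k)
  case 0
  have "(\<lambda>n. x^n) sums (1/(1-x))" using geometric_sums[OF assms] by simp
  moreover have "summable (\<lambda>n. norm x ^ n)" using assms by (simp add: summable_geometric)
  ultimately show ?case by (simp add: norm_power)
next
  case (Suc k)
  define a where "a = (\<lambda>n. of_nat (n choose k) * x^n)"
  define b where "b = (\<lambda>n::nat. x^n)"
  have sa: "summable (\<lambda>n. norm (a n))" using Suc a_def by simp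
  have sb: "summable (\<lambda>n. norm (b n))" using assms by (simp add: b_def norm_power summable_geometric)
  have suma: "(\<Sum>n. a n) = x^k / (1-x)^(Suc k)" using Suc a_def sums_iff by blast
  have sumb: "(\<Sum>n. b n) = 1/(1-x)" unfolding b_def using geometric_sums[OF assms] sums_unique by (metis divide_inverse mult_1)
  have eq: "(\<Sum>i\<le>n. a i * b (n - i)) = of_nat (Suc n choose Suc k) * x^n" for n
  proof -
    have "(\<Sum>i\<le>n. a i * b (n - i)) = (\<Sum>i\<le>n. of_nat (i choose k) * x^n)"
      by (intro sum.cong refl) (simp add: a_def b_def mult.assoc flip: power_add)
    also have "\<dots> = of_nat (\<Sum>i\<le>n. i choose k) * x^n" by (simp add: sum_distrib_right)
    also have "\<dots> = of_nat (Suc n choose Suc k) * x^n" by (simp add: sum_choose_upper)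
    finally show ?thesis .
  qed
  have c1: "(\<lambda>n. of_nat (Suc n choose Suc k) * x^n) sums (x^k / (1-x)^(Suc k) * (1/(1-x)))"
    using Cauchy_product_sums[OF sa sb] unfolding eq suma sumb .
  have "(\<lambda>n. x * (of_nat (Suc n choose Suc k) * x^n)) sums (x * (x^k / (1-x)^(Suc k) * (1/(1-x))))"
    by (rule sums_mult[OF c1])
  hence "(\<lambda>n. of_nat (Suc n choose Suc k) * x^(Suc n)) sums (x^(Suc k) / (1-x)^(Suc (Suc k)))"
    using assms by (simp add: field_simps)
  hence s2: "(\<lambda>n. of_nat (n choose Suc k) * x^n) sums (x^(Suc k) / (1-x)^(Suc (Suc k)))"
    using sums_Suc_iff[where f="\<lambda>n. of_nat (n choose Suc k) * x^n"] by simp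
  have eqn: "(\<Sum>i\<le>n. norm (a i) * norm (b (n - i))) = of_nat (Suc n choose Suc k) * norm x^n" for n
  proof -
    have "(\<Sum>i\<le>n. norm (a i) * norm (b (n - i))) = (\<Sum>i\<le>n. of_nat (i choose k) * norm x^n)"
      by (intro sum.cong refl) (simp add: a_def b_def norm_mult norm_power mult.assoc flip: power_add)
    also have "\<dots> = of_nat (\<Sum>i\<le>n. i choose k) * norm x^n" by (simp add: sum_distrib_right)
    also have "\<dots> = of_nat (Suc n choose Suc k) * norm x^n" by (simp add: sum_choose_upper)
    finally show ?thesis .
  qed
  have "summable (\<lambda>n. norm (norm (a n)))" using sa by simp
  moreover have "summable (\<lambda>n. norm (norm (b n)))" using sb by simp
  ultimately have "summable (\<lambda>n. \<Sum>i\<le>n. norm (a i) * norm (b (n - i)))"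
    by (rule summable_Cauchy_product)
  hence "summable (\<lambda>n. real (Suc n choose Suc k) * norm x^n)" unfolding eqn .
  hence "summable (\<lambda>n. norm x * (real (Suc n choose Suc k) * norm x^n))" by (rule summable_mult)
  hence "summable (\<lambda>n. norm (of_nat (Suc n choose Suc k) * x^(Suc n)))"
    by (simp add: norm_mult norm_power mult_ac del: binomial_Suc_Suc)
  hence "summable (\<lambda>n. norm (of_nat (n choose Suc k) * x^n))"
    using summable_Suc_iff[where f="\<lambda>n. norm (of_nat (n choose Suc k) * x^n)"] by simp
  with s2 show ?case by blast
qed

definition uu :: "complex \<Rightarrow> complex" where "uu x = x / (1 - x)"
definition Lk :: "nat \<Rightarrow> complex \<Rightarrow> complex" where
  "Lk k x = (\<Sum>j<k. (-1)^j * uu x ^ (k - j) / of_nat (k - j)) - (-1)^k * Ln (1 - x)"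

lemma L0_sums:
  fixes x :: complex assumes "norm x < 1"
  shows "(\<lambda>n. x^(Suc n) / of_nat (Suc n)) sums (- Ln (1 - x))"
proof -
  have "norm (-x) < 1" using assms by simp
  from Ln_series'[OF this] have "(\<lambda>n. - (x^n) / of_nat n) sums Ln (1 - x)" by simp
  hence "(\<lambda>n. x^n / of_nat n) sums (- Ln (1 - x))" using sums_minus by fastforce
  thus ?thesis using sums_Suc_iff[where f="\<lambda>n. x^n / of_nat n"] by simp
qed

lemma Lk_sums:
  fixes x :: complex assumes "norm x < 1"
  shows "(\<lambda>n. of_nat (n choose k) * x^(Suc n) / of_nat (Suc n)) sums Lk k x"
proof (induction k)
  case 0
  then show ?case using L0_sums[OF assms] by (simp add: Lk_def)
next
  case (Suc k)
  have x1: "1 - x \<noteq> 0" using assms by auto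
  have b: "(\<lambda>n. of_nat (n choose k) * x^n) sums (x^k / (1-x)^(Suc k))"
    using base_lemma[OF assms] by blast
  have "(\<lambda>n. x / of_nat (Suc k) * (of_nat (n choose k) * x^n)) sums (x / of_nat (Suc k) * (x^k / (1-x)^(Suc k)))"
    by (rule sums_mult[OF b])
  moreover have "x / of_nat (Suc k) * (of_nat (n choose k) * x^n) = of_nat (Suc n choose Suc k) * x^(Suc n) / of_nat (Suc n)" for n
  proof -
    have "of_nat (Suc k) * of_nat (Suc n choose Suc k) = (of_nat (Suc n) * of_nat (n choose k) :: complex)"
      using Suc_times_binomial[of k n] by (metis of_nat_mult)
    thus ?thesis by (simp add: field_simps del: binomial_Suc_Suc of_nat_Suc)
  qed
  moreover have "x / of_nat (Suc k) * (x^k / (1-x)^(Suc k)) = uu x ^ Suc k / of_nat (Suc k)"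
    by (simp add: uu_def power_divide)
  ultimately have s1: "(\<lambda>n. of_nat (Suc n choose Suc k) * x^(Suc n) / of_nat (Suc n)) sums (uu x ^ Suc k / of_nat (Suc k))"
    by simp
  have "(\<lambda>n. of_nat (Suc n choose Suc k) * x^(Suc n) / of_nat (Suc n) - of_nat (n choose k) * x^(Suc n) / of_nat (Suc n))
      sums (uu x ^ Suc k / of_nat (Suc k) - Lk k x)"
    by (rule sums_diff[OF s1 Suc])
  moreover have "of_nat (Suc n choose Suc k) * x^(Suc n) / of_nat (Suc n) - of_nat (n choose k) * x^(Suc n) / of_nat (Suc n)
      = of_nat (n choose Suc k) * x^(Suc n) / of_nat (Suc n)" for n
    by (simp add: algebra_simps add_divide_distrib)
  moreover have "uu x ^ Suc k / of_nat (Suc k) - Lk k x = Lk (Suc k) x"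
  proof -
    have "(\<Sum>j<Suc k. (-1)^j * uu x ^ (Suc k - j) / of_nat (Suc k - j))
        = uu x ^ Suc k / of_nat (Suc k) + (\<Sum>j<k. (-1)^(Suc j) * uu x ^ (Suc k - Suc j) / of_nat (Suc k - Suc j))"
      by (subst sum.lessThan_Suc_shift) simp
    also have "\<dots> = uu x ^ Suc k / of_nat (Suc k) - (\<Sum>j<k. (-1)^j * uu x ^ (k - j) / of_nat (k - j))"
      by (simp add: sum_negf[symmetric])
    finally show ?thesis unfolding Lk_def by simp
  qed
  ultimately show ?case by simp
qed

lemma T_sums:
  fixes x :: complex assumes "norm x < 1" and "m \<ge> 1"
  shows "(\<lambda>n. of_nat (n choose m) * x^n / (of_nat n)^2) sums (Lk (m - 1) x / of_nat m)"
proof -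
  obtain p where m: "m = Suc p" using assms(2) by (cases m) auto
  have "(\<lambda>n. of_nat (n choose p) * x^(Suc n) / of_nat (Suc n) / of_nat m) sums (Lk p x / of_nat m)"
    using sums_divide[OF Lk_sums[OF assms(1)]] .
  moreover have "of_nat (n choose p) * x^(Suc n) / of_nat (Suc n) / of_nat m
     = of_nat (Suc n choose m) * x^(Suc n) / (of_nat (Suc n))^2" for n
  proof -
    have "of_nat (Suc p) * of_nat (Suc n choose Suc p) = (of_nat (Suc n) * of_nat (n choose p) :: complex)"
      using Suc_times_binomial[of p n] by (metis of_nat_mult)
    thus ?thesis unfolding m by (simp add: field_simps power2_eq_square del: binomial_Suc_Suc of_nat_Suc)
  qed
  ultimately have "(\<lambda>n. of_nat (Suc n choose m) * x^(Suc n) / (of_nat (Suc n))^2) sums (Lk p x / of_nat m)"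
    by simp
  thus ?thesis using m sums_Suc_iff[where f="\<lambda>n. of_nat (n choose m) * x^n / (of_nat n)^2"] by simp
qed

lemma Q_sums:
  fixes x :: complex assumes "norm x < 1" and "x \<noteq> 0"
  shows "(\<lambda>n. of_nat (n choose m) * x^n / of_nat (Suc n)) sums (Lk m x / x)"
proof -
  have "(\<lambda>n. of_nat (n choose m) * x^(Suc n) / of_nat (Suc n) / x) sums (Lk m x / x)"
    using sums_divide[OF Lk_sums[OF assms(1)]] .
  moreover have "of_nat (n choose m) * x^(Suc n) / of_nat (Suc n) / x = of_nat (n choose m) * x^n / of_nat (Suc n)" for n
    using assms(2) by (simp add: field_simps del: of_nat_Suc)
  ultimately show ?thesis by simp
qed

lemma P_sums:
  fixes x :: complex assumes "norm x < 1" and "m \<ge> 2"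
  shows "(\<lambda>n. of_nat (n choose m) * x^n / (of_nat n - 1))
     sums ((1 - x) * uu x ^ m / of_nat (m - 1) + x * uu x ^ m / of_nat m)"
proof -
  obtain q where m: "m = Suc (Suc q)" using assms(2) by (metis add_2_eq_Suc le_Suc_ex)
  have x1: "1 - x \<noteq> 0" using assms by auto
  have bA: "(\<lambda>n. of_nat (n choose Suc q) * x^n) sums (x^(Suc q) / (1-x)^(Suc (Suc q)))"
    using base_lemma[OF assms(1)] by blast
  hence A: "(\<lambda>n. of_nat (Suc n choose Suc q) * x^(Suc n)) sums (x^(Suc q) / (1-x)^(Suc (Suc q)))"
    using sums_Suc_iff[where f="\<lambda>n. of_nat (n choose Suc q) * x^n"] by simp
  have B: "(\<lambda>n. of_nat (n choose q) * x^n) sums (x^q / (1-x)^(Suc q))"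
    using base_lemma[OF assms(1)] by blast
  have "(\<lambda>n. x / of_nat m * (of_nat (Suc n choose Suc q) * x^(Suc n)) + x^2 / (of_nat m * of_nat (Suc q)) * (of_nat (n choose q) * x^n))
     sums (x / of_nat m * (x^(Suc q) / (1-x)^(Suc (Suc q))) + x^2 / (of_nat m * of_nat (Suc q)) * (x^q / (1-x)^(Suc q)))"
    by (intro sums_add sums_mult A B)
  moreover have "x / of_nat m * (of_nat (Suc n choose Suc q) * x^(Suc n)) + x^2 / (of_nat m * of_nat (Suc q)) * (of_nat (n choose q) * x^n)
     = of_nat (Suc (Suc n) choose m) * x^(Suc (Suc n)) / (of_nat (Suc (Suc n)) - 1)" for n
  proof -
    have e1: "of_nat (Suc q) * of_nat (Suc n choose Suc q) = (of_nat (Suc n) * of_nat (n choose q) :: complex)"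
      using Suc_times_binomial[of q n] by (metis of_nat_mult)
    have e2: "of_nat (Suc (Suc q)) * of_nat (Suc (Suc n) choose Suc (Suc q)) = (of_nat (Suc (Suc n)) * of_nat (Suc n choose Suc q) :: complex)"
      using Suc_times_binomial[of "Suc q" "Suc n"] by (metis of_nat_mult)
    have d: "(of_nat (Suc n choose Suc q) :: complex) = of_nat (Suc n) * of_nat (n choose q) / of_nat (Suc q)"
      using e1 by (simp add: field_simps del: binomial_Suc_Suc of_nat_Suc)
    have e: "(of_nat (Suc (Suc n) choose Suc (Suc q)) :: complex) = of_nat (Suc (Suc n)) * of_nat (Suc n choose Suc q) / of_nat (Suc (Suc q))"
      using e2 by (simp add: field_simps del: binomial_Suc_Suc of_nat_Suc)
    show ?thesis unfolding m e d
      by (simp add: field_simps power2_eq_square del: binomial_Suc_Suc of_nat_Suc) (simp add: algebra_simps)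
  qed
  moreover have "x / of_nat m * (x^(Suc q) / (1-x)^(Suc (Suc q))) + x^2 / (of_nat m * of_nat (Suc q)) * (x^q / (1-x)^(Suc q))
      = (1 - x) * uu x ^ m / of_nat (m - 1) + x * uu x ^ m / of_nat m"
  proof -
    define W where "W = x^(Suc (Suc q)) / (1-x)^(Suc (Suc q))"
    define c where "c = 1 - x"
    have c0: "c \<noteq> 0" using x1 c_def by simp
    have l: "x / of_nat m * (x^(Suc q) / (1-x)^(Suc (Suc q))) + x^2 / (of_nat m * of_nat (Suc q)) * (x^q / (1-x)^(Suc q))
        = W * (1 / of_nat m + c / (of_nat m * of_nat (Suc q)))"
      unfolding W_def c_def[symmetric] using c0 by (simp add: field_simps power2_eq_square del: of_nat_Suc)
    have r: "(1 - x) * uu x ^ m / of_nat (m - 1) + x * uu x ^ m / of_nat m = W * (c / of_nat (Suc q) + x / of_nat m)"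
      unfolding W_def uu_def c_def[symmetric] m using c0 by (simp add: field_simps power_divide del: of_nat_Suc)
    have "1 / of_nat m + c / (of_nat m * of_nat (Suc q)) = c / of_nat (Suc q) + (x / of_nat m :: complex)"
      unfolding m c_def by (simp add: field_simps del: of_nat_Suc) (simp add: algebra_simps)
    thus ?thesis using l r by simp
  qed
  ultimately have "(\<lambda>n. of_nat (Suc (Suc n) choose m) * x^(Suc (Suc n)) / (of_nat (Suc (Suc n)) - 1))
     sums ((1 - x) * uu x ^ m / of_nat (m - 1) + x * uu x ^ m / of_nat m)" by simp
  thus ?thesis using m sums_Suc_iff[where f="\<lambda>n. of_nat (n choose m) * x^n / (of_nat n - 1)"]
     sums_Suc_iff[where f="\<lambda>n. of_nat (Suc n choose m) * x^(Suc n) / (of_nat (Suc n) - 1)"] by simp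
qed

lemma Ln_mult_rpos:
  fixes w v :: complex assumes "Re w > 0" "Re v > 0"
  shows "Ln (w * v) = Ln w + Ln v"
proof -
  have w0: "w \<noteq> 0" "v \<noteq> 0" using assms by auto
  have "\<bar>Im (Ln w)\<bar> < pi/2" "\<bar>Im (Ln v)\<bar> < pi/2" using assms Re_Ln_pos_lt_imp by auto
  hence "- pi < Im (Ln w + Ln v)" "Im (Ln w + Ln v) \<le> pi" by auto
  thus ?thesis using Ln_times[OF w0] by auto
qed

lemma Ln_div_rpos:
  fixes w v :: complex assumes "Re w > 0" "Re v > 0"
  shows "Ln (w / v) = Ln w - Ln v"
proof -
  have v0: "v \<noteq> 0" using assms by auto
  have "Re (inverse v) > 0" using assms v0 by (simp add: Re_inverse complex_neq_0 add_pos_nonneg divide_pos_pos)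
  hence "Ln (w * inverse v) = Ln w + Ln (inverse v)" using Ln_mult_rpos assms by blast
  moreover have "v \<notin> \<real>\<^sub>\<le>\<^sub>0" using assms by (auto simp: complex_nonpos_Reals_iff)
  hence "Ln (inverse v) = - Ln v" by (rule Ln_inverse)
  ultimately show ?thesis by (simp add: divide_inverse)
qed

lemma pf_lemma:
  fixes K :: complex assumes "2*K+1 \<noteq> 0" "K+1 \<noteq> 0" "2*K+3 \<noteq> 0"
  shows "2 / (2*K+1) - 2 / (2*K+3) - 4 / (2*K+2)^2 = 1 / ((2*K+1) * (K+1)^2 * (2*K+3))"
proof -
  have "(2*K+2)^2 = 4 * (K+1)^2" by (simp add: power2_eq_square algebra_simps)
  hence "4 / (2*K+2)^2 = 1 / (K+1)^2" by simp
  moreover have "2 / (2*K+1) - 2 / (2*K+3) - 1 / (K+1)^2 = 1 / ((2*K+1) * (K+1)^2 * (2*K+3))"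
  proof -
    have g: "2/A - 2/C - 1/B^2 = 1/(A*B^2*C)" if "A \<noteq> 0" "B \<noteq> 0" "C \<noteq> 0" "C = A + 2" "A*C = 4*B^2 - 1" for A B C :: complex
    proof -
      have h1: "2/A - 2/C = 4/(A*C)" using that by (simp add: field_simps)
      have e: "4*B^2 - A*C = 1" using that(5) by (simp add: algebra_simps)
      have "2/A - 2/C - 1/B^2 = 4/(A*C) - 1/B^2" by (simp only: h1)
      also have "\<dots> = (4*B^2 - A*C)/(A*B^2*C)" using that(1,2,3) by (simp add: field_simps)
      also have "\<dots> = 1/(A*B^2*C)" by (simp only: e)
      finally show ?thesis .
    qed
    show ?thesis by (rule g) (use assms in \<open>auto simp: algebra_simps power2_eq_square\<close>)
  qed
  ultimately show ?thesis by simp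
qed

lemma sign_lemma:
  fixes y :: complex assumes "j \<le> n"
  shows "(-1)^j * (-y)^(n-j) = (-1)^n * y^(n-j)"
proof -
  have "(-1)^j * (-y)^(n-j) = ((-1)^j * (-1)^(n-j)) * y^(n-j)" by (simp add: power_minus[of y] mult.assoc)
  also have "(-1)^j * (-1)^(n-j) = ((-1)^n :: complex)" using assms by (simp flip: power_add)
  finally show ?thesis .
qed

theorem lemma6:
  fixes m :: nat and z :: complex
  assumes "m \<ge> 2" and "0 < cmod z" and "cmod z < 1"
  shows "(\<lambda>n. let k = n + 1 in
            of_nat ((2*k) choose m) * z ^ (2*k)
              / (of_nat (2*k - 1) * of_nat k ^ 2 * of_nat (2*k + 1)))
    sums
    (2 * (-1) ^ (m - 1) / of_nat m * Ln (1 - z^2)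
     + (-1) ^ m / z * Ln ((1 - z) / (1 + z))
     + 1 / of_nat (m - 1) * ((-1) ^ m * (1 + z) * (z / (1 + z)) ^ m
                              + (1 - z) * (z / (1 - z)) ^ m)
     - 1 / of_nat m * ((-1) ^ m * z * (z / (1 + z)) ^ m - z * (z / (1 - z)) ^ m)
     + 2 / of_nat m * (\<Sum>j=1..m-1. 1 / of_nat (m - j) *
          ((-1) ^ m * (z / (1 + z)) ^ (m - j) + (-1) ^ j * (z / (1 - z)) ^ (m - j)))
     + (\<Sum>j=0..m-1. 1 / of_nat (m - j) *
          ((-1) ^ m * (1 / z) * (z / (1 + z)) ^ (m - j)
           - (-1) ^ j * (1 / z) * (z / (1 - z)) ^ (m - j))))"
proof -
  obtain q where m: "m = Suc (Suc q)" using assms(1) by (metis add_2_eq_Suc le_Suc_ex)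
  have z0: "z \<noteq> 0" using assms(2) by auto
  have zn: "norm (-z) < 1" using assms(3) by simp
  define Pf :: "complex \<Rightarrow> complex" where "Pf x = (1 - x) * uu x ^ m / of_nat (m - 1) + x * uu x ^ m / of_nat m" for x
  define Qf :: "complex \<Rightarrow> complex" where "Qf x = Lk m x / x" for x
  define Tf :: "complex \<Rightarrow> complex" where "Tf x = Lk (m - 1) x / of_nat m" for x
  define t :: "nat \<Rightarrow> complex \<Rightarrow> complex" where "t n x = of_nat (n choose m) * x^n * (2 / (of_nat n - 1) - 2 / of_nat (Suc n) - 4 / (of_nat n)^2)" for n x
  have tS: "(\<lambda>n. t n x) sums (2 * Pf x - 2 * Qf x - 4 * Tf x)" if "norm x < 1" "x \<noteq> 0" for x :: complex
  proof -
    have "(\<lambda>n. 2 * (of_nat (n choose m) * x^n / (of_nat n - 1)) - 2 * (of_nat (n choose m) * x^n / of_nat (Suc n))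
        - 4 * (of_nat (n choose m) * x^n / (of_nat n)^2)) sums (2 * Pf x - 2 * Qf x - 4 * Tf x)"
      unfolding Pf_def Qf_def Tf_def
      by (intro sums_diff sums_mult P_sums Q_sums T_sums that assms(1)) (use assms(1) in auto)
    moreover have "2 * (of_nat (n choose m) * x^n / (of_nat n - 1)) - 2 * (of_nat (n choose m) * x^n / of_nat (Suc n))
        - 4 * (of_nat (n choose m) * x^n / (of_nat n)^2) = t n x" for n
      unfolding t_def by (simp add: algebra_simps del: of_nat_Suc)
    ultimately show ?thesis by simp
  qed
  define h where "h n = (t n z + t n (-z)) / 2" for n
  have "h sums ((2 * Pf z - 2 * Qf z - 4 * Tf z + (2 * Pf (-z) - 2 * Qf (-z) - 4 * Tf (-z))) / 2)"
    unfolding h_def using z0 by (intro sums_divide sums_add tS assms(3) zn) auto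
  from sums_group[OF this, of 2]
  have "(\<lambda>n. t (2 * n) z) sums ((2 * Pf z - 2 * Qf z - 4 * Tf z + (2 * Pf (-z) - 2 * Qf (-z) - 4 * Tf (-z))) / 2)"
  proof -
    have "sum h {n * 2..<n * 2 + 2} = t (2 * n) z" for n
    proof -
      have "sum h {n * 2..<n * 2 + 2} = h (2*n) + h (2*n+1)" by (simp add: numeral_2_eq_2 mult.commute)
      moreover have "t (2*n) (-z) = t (2*n) z" unfolding t_def by simp
      moreover have "t (2*n+1) (-z) = - t (2*n+1) z" unfolding t_def by simp
      ultimately show ?thesis unfolding h_def by simp
    qed
    thus ?thesis using sums_group[OF \<open>h sums _\<close>, of 2] by simp
  qed
  hence S1: "(\<lambda>n. t (2 * Suc n) z) sums ((2 * Pf z - 2 * Qf z - 4 * Tf z + (2 * Pf (-z) - 2 * Qf (-z) - 4 * Tf (-z))) / 2)"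
    using sums_Suc_iff[where f="\<lambda>n. t (2 * n) z"] m by (simp add: t_def)
  have teq: "t (2 * Suc n) z = (let k = n + 1 in
            of_nat ((2*k) choose m) * z ^ (2*k)
              / (of_nat (2*k - 1) * of_nat k ^ 2 * of_nat (2*k + 1)))" for n
  proof -
    have a1: "(of_nat (Suc (2*n)) :: complex) \<noteq> 0" by (rule of_nat_neq_0)
    have a2: "(of_nat (Suc n) :: complex) \<noteq> 0" by (rule of_nat_neq_0)
    have a3: "(of_nat (Suc (Suc (Suc (2*n)))) :: complex) \<noteq> 0" by (rule of_nat_neq_0)
    have b1: "(2 * of_nat n + 1 :: complex) \<noteq> 0" using a1 by (simp add: add.commute)
    have b2: "(of_nat n + 1 :: complex) \<noteq> 0" using a2 by (simp add: add.commute)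
    have b3: "(2 * of_nat n + 3 :: complex) \<noteq> 0" using a3 by (simp add: add.commute)
    have "(2 / (of_nat (2 * Suc n) - 1) - 2 / of_nat (Suc (2 * Suc n)) - 4 / (of_nat (2 * Suc n))^2 :: complex)
        = 1 / (of_nat (2*(n+1) - 1) * of_nat (n+1) ^ 2 * of_nat (2*(n+1) + 1))"
      using pf_lemma[OF b1 b2 b3] by (simp add: algebra_simps)
    thus ?thesis unfolding t_def Let_def by simp
  qed
  have req: "(2 * Pf z - 2 * Qf z - 4 * Tf z + (2 * Pf (-z) - 2 * Qf (-z) - 4 * Tf (-z))) / 2 = 
    (2 * (-1) ^ (m - 1) / of_nat m * Ln (1 - z^2)
     + (-1) ^ m / z * Ln ((1 - z) / (1 + z))
     + 1 / of_nat (m - 1) * ((-1) ^ m * (1 + z) * (z / (1 + z)) ^ m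
                              + (1 - z) * (z / (1 - z)) ^ m)
     - 1 / of_nat m * ((-1) ^ m * z * (z / (1 + z)) ^ m - z * (z / (1 - z)) ^ m)
     + 2 / of_nat m * (\<Sum>j=1..m-1. 1 / of_nat (m - j) *
          ((-1) ^ m * (z / (1 + z)) ^ (m - j) + (-1) ^ j * (z / (1 - z)) ^ (m - j)))
     + (\<Sum>j=0..m-1. 1 / of_nat (m - j) *
          ((-1) ^ m * (1 / z) * (z / (1 + z)) ^ (m - j)
           - (-1) ^ j * (1 / z) * (z / (1 - z)) ^ (m - j))))"
  proof -
    have r1: "Re (1 - z) > 0" "Re (1 + z) > 0" using abs_Re_le_cmod[of z] assms(3) by auto
    have nz: "1 - z \<noteq> 0" "1 + z \<noteq> 0" using r1 by (auto simp: complex_eq_iff)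
    have L1: "Ln (1 - z^2) = Ln (1 - z) + Ln (1 + z)"
    proof -
      have "1 - z^2 = (1 - z) * (1 + z)" by (simp add: algebra_simps power2_eq_square)
      thus ?thesis using Ln_mult_rpos[OF r1] by simp
    qed
    have L2: "Ln ((1 - z) / (1 + z)) = Ln (1 - z) - Ln (1 + z)" using Ln_div_rpos[OF r1] .
    have u1: "uu z = z / (1 - z)" and u2: "uu (-z) = - (z / (1 + z))" by (simp_all add: uu_def)
    have M: "(of_nat m :: complex) \<noteq> 0" "(of_nat (m - 1) :: complex) \<noteq> 0" using assms(1) by auto
    have m1: "m - 1 = Suc q" using m by simp
    define a where "a = z / (1 + z)"
    define b where "b = z / (1 - z)"
    have PA: "Pf z + Pf (-z) = 1 / of_nat (m - 1) * ((-1) ^ m * (1 + z) * a ^ m + (1 - z) * b ^ m)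
       - 1 / of_nat m * ((-1) ^ m * z * a ^ m - z * b ^ m)"
    proof -
      have g: "(1-z)*B/M1 + z*B/M + ((1+z)*(s*A)/M1 + (-z)*(s*A)/M) = 1/M1*(s*(1+z)*A + (1-z)*B) - 1/M*(s*z*A - z*B)"
        if "M \<noteq> 0" "M1 \<noteq> 0" for A B M M1 s :: complex
        using that by (simp add: field_simps)
      show ?thesis unfolding Pf_def u1 u2 a_def[symmetric] b_def[symmetric] power_minus[of a] diff_minus_eq_add
        by (rule g[OF M])
    qed
    define SB where "SB = (\<Sum>j<m. (-1)^j * b ^ (m - j) / of_nat (m - j))"
    define SA where "SA = (\<Sum>j<m. (-1)^m * a ^ (m - j) / of_nat (m - j))"
    have LkA: "Lk m (-z) = SA - (-1)^m * Ln (1 + z)"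
    proof -
      have "(\<Sum>j<m. (-1)^j * uu (-z) ^ (m - j) / of_nat (m - j)) = SA"
        unfolding SA_def u2 a_def[symmetric]
        by (intro sum.cong refl) (simp add: sign_lemma[of _ m a] mult.assoc[symmetric])
      thus ?thesis unfolding Lk_def by simp
    qed
    have LkB: "Lk m z = SB - (-1)^m * Ln (1 - z)" unfolding Lk_def SB_def u1 b_def by simp
    have R6: "(\<Sum>j=0..m-1. 1 / of_nat (m - j) *
          ((-1) ^ m * (1 / z) * a ^ (m - j) - (-1) ^ j * (1 / z) * b ^ (m - j))) = (SA - SB) / z"
    proof -
      have g: "1/c * (s*(1/z)*A - t*(1/z)*B) = (s*A/c - t*B/c)/z" for c s t A B :: complex
        by (cases "c=0"; cases "z=0") (simp_all add: field_simps)
      have "{0..m-1} = {..<m}" using assms(1) by auto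
      hence "(\<Sum>j=0..m-1. 1 / of_nat (m - j) *
          ((-1) ^ m * (1 / z) * a ^ (m - j) - (-1) ^ j * (1 / z) * b ^ (m - j)))
          = (\<Sum>j<m. ((-1)^m * a ^ (m - j) / of_nat (m - j) - (-1)^j * b ^ (m - j) / of_nat (m - j)) / z)"
        by (simp only: g)
      also have "\<dots> = (SA - SB) / z" unfolding SA_def SB_def
        by (simp only: sum_divide_distrib[symmetric] sum_subtractf)
      finally show ?thesis .
    qed
    have PB: "- Qf z - Qf (-z) = (-1) ^ m / z * Ln ((1 - z) / (1 + z)) + (SA - SB) / z"
    proof -
      have g: "-((SB - s*L1)/z) - (SA - s*L2)/(-z) = s/z*(L1-L2) + (SA-SB)/z" for s L1 L2 SA SB :: complex
        using z0 by (simp add: field_simps)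
      show ?thesis unfolding Qf_def LkA LkB L2 by (rule g)
    qed
    define TB where "TB = (\<Sum>j<Suc q. (-1)^j * b ^ (Suc q - j) / of_nat (Suc q - j))"
    define TA where "TA = (\<Sum>j<Suc q. (-1)^(Suc q) * a ^ (Suc q - j) / of_nat (Suc q - j))"
    have TkA: "Lk (m-1) (-z) = TA - (-1)^(Suc q) * Ln (1 + z)"
    proof -
      have "(\<Sum>j<Suc q. (-1)^j * uu (-z) ^ (Suc q - j) / of_nat (Suc q - j)) = TA"
        unfolding TA_def u2 a_def[symmetric]
        by (intro sum.cong refl) (simp add: sign_lemma[of _ "Suc q" a] mult.assoc[symmetric] del: power_Suc)
      thus ?thesis unfolding Lk_def m1 by simp
    qed
    have TkB: "Lk (m-1) z = TB - (-1)^(Suc q) * Ln (1 - z)" unfolding Lk_def TB_def u1 b_def m1 by simp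
    have R5: "(\<Sum>j=1..m-1. 1 / of_nat (m - j) *
          ((-1) ^ m * a ^ (m - j) + (-1) ^ j * b ^ (m - j))) = - (TA + TB)"
    proof -
      have g: "1/c * (s*A + t*B) = - ((-s)*A/c + (-t)*B/c)" for c s t A B :: complex
        by (cases "c=0") (simp_all add: field_simps)
      have sm: "(-1::complex)^m = - ((-1)^(Suc q))" using m by simp
      have "(\<Sum>j=1..m-1. 1 / of_nat (m - j) * ((-1) ^ m * a ^ (m - j) + (-1) ^ j * b ^ (m - j)))
          = (\<Sum>j=0..q. 1 / of_nat (m - Suc j) * ((-1) ^ m * a ^ (m - Suc j) + (-1) ^ (Suc j) * b ^ (m - Suc j)))"
        unfolding m1 by (simp only: sum.shift_bounds_cl_Suc_ivl One_nat_def)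
      also have "\<dots> = (\<Sum>j<Suc q. - ((-1)^(Suc q) * a ^ (Suc q - j) / of_nat (Suc q - j) + (-1)^j * b ^ (Suc q - j) / of_nat (Suc q - j)))"
      proof -
        have "{0..q} = {..<Suc q}" by auto
        moreover have "m - Suc j = Suc q - j" for j using m by simp
        moreover have g': "1/c*(X + -Y) = -(-X/c + Y/c)" for c X Y :: complex
          by (cases "c=0") (simp_all add: field_simps)
        ultimately show ?thesis by (simp only: g sm minus_minus power_Suc mult_minus_left mult_1)
      qed
      also have "\<dots> = - (TA + TB)" unfolding TA_def TB_def
        by (simp only: sum_negf sum.distrib)
      finally show ?thesis .
    qed
    have PC: "- 2 * Tf z - 2 * Tf (-z) = 2 * (-1) ^ (m - 1) / of_nat m * Ln (1 - z^2) - 2 / of_nat m * (TA + TB)"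
    proof -
      have g: "- 2 * ((Y - sg * L1) / MM) - 2 * ((X - sg * L2) / MM) = 2 * sg / MM * (L1 + L2) - 2 / MM * (X + Y)" for sg L1 L2 MM X Y :: complex
        by (cases "MM = 0") (simp_all add: field_simps)
      show ?thesis unfolding Tf_def m1 TkA[unfolded m1] TkB[unfolded m1] L1 by (rule g)
    qed
    have g2: "(2 * P1 - 2 * Q1 - 4 * T1 + (2 * P2 - 2 * Q2 - 4 * T2)) / 2
       = (P1 + P2) + (- Q1 - Q2) + (- 2 * T1 - 2 * T2)" for P1 P2 Q1 Q2 T1 T2 :: complex
      by (simp add: field_simps)
    have g3: "(X3 - X4) + (R2 + SS/z) + (R1 - 2/M * TT) = R1 + R2 + X3 - X4 + 2/M * (- TT) + SS/z"
      for X3 X4 R2 SS R1 M TT :: complex by (simp add: algebra_simps)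
    have fin: "(2 * Pf z - 2 * Qf z - 4 * Tf z + (2 * Pf (-z) - 2 * Qf (-z) - 4 * Tf (-z))) / 2 = 
    (2 * (-1) ^ (m - 1) / of_nat m * Ln (1 - z^2)
     + (-1) ^ m / z * Ln ((1 - z) / (1 + z))
     + 1 / of_nat (m - 1) * ((-1) ^ m * (1 + z) * a ^ m
                              + (1 - z) * b ^ m)
     - 1 / of_nat m * ((-1) ^ m * z * a ^ m - z * b ^ m)
     + 2 / of_nat m * (\<Sum>j=1..m-1. 1 / of_nat (m - j) *
          ((-1) ^ m * a ^ (m - j) + (-1) ^ j * b ^ (m - j)))
     + (\<Sum>j=0..m-1. 1 / of_nat (m - j) *
          ((-1) ^ m * (1 / z) * a ^ (m - j)
           - (-1) ^ j * (1 / z) * b ^ (m - j))))"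
      unfolding g2 PA PB PC R5 R6 g3 ..
    thus ?thesis unfolding a_def b_def .
  qed
  show ?thesis using S1 unfolding teq req .
qed

end
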